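(* Let $A\in\mathbb{R}^{2\times2}$ be such that $(e^{t(A-s(A))})_{t\ge0}$ is bounded. If the semigroup $(e^{tA})_{t\ge0}$ is asymptotically positive, then it is positive.
   Context: $\mathbb{C}^2$ carries the coordinatewise order; $d_+(f)=\operatorname{dist}(f,\mathbb{C}^2_+)$; $s(A)$ is the spectral bound. The semigroup is asymptotically positive if $d_+(e^{t(A-s(A))}f)\to0$ as $t\to\infty$ for every $f\ge0$; positive means every $e^{tA}$ has non-negative entries. *)

theory Defs
  imports "HOL-Analysis.Analysis"
begin

primrec mat_pow :: "'a::semiring_1^'n^'n \<Rightarrow> nat \<Rightarrow> 'a^'n^'n" where
  "mat_pow A 0 = mat 1"
| "mat_pow A (Suc k) = A ** mat_pow A k"

definition mat_exp :: "'a::{real_normed_field,banach}^'n^'n \<Rightarrow> 'a^'n^'n" where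
  "mat_exp A = (\<Sum>k. (1 / fact k) *\<^sub>R mat_pow A k)"

definition cmat :: "real^'n^'n \<Rightarrow> complex^'n^'n" where
  "cmat A = map_matrix complex_of_real A"

definition spec :: "real^'n^'n \<Rightarrow> complex set" where
  "spec A = {z. det (cmat A - mat z) = 0}"

definition spectral_bound :: "real^'n^'n \<Rightarrow> real" where
  "spectral_bound A = Max (Re ` spec A)"

definition cpos :: "(complex^'n) set" where
  "cpos = {f. \<forall>i. f $ i \<in> \<real> \<and> 0 \<le> Re (f $ i)}"

definition dplus :: "complex^'n \<Rightarrow> real" where
  "dplus f = infdist f cpos"

definition rescaled_sg :: "real^'n^'n \<Rightarrow> real \<Rightarrow> complex^'n^'n" where
  "rescaled_sg A t = mat_exp (t *\<^sub>R (cmat A - mat (complex_of_real (spectral_bound A))))"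

definition asymptotically_positive :: "real^'n^'n \<Rightarrow> bool" where
  "asymptotically_positive A \<longleftrightarrow>
     (\<forall>f \<in> cpos. ((\<lambda>t. dplus (rescaled_sg A t *v f)) \<longlongrightarrow> 0) at_top)"

definition positive_semigroup :: "real^'n^'n \<Rightarrow> bool" where
  "positive_semigroup A \<longleftrightarrow> (\<forall>t\<ge>0. \<forall>i j. 0 \<le> mat_exp (t *\<^sub>R A) $ i $ j)"

end

theory Submission
  imports Defs
begin

lemma pow_ids:
  fixes a b c d l m x y :: "'a::comm_ring_1"
  assumes d: "d = l + m - a" and e: "b*c = a*d - l*m"
  shows "a * ((x - y) * a + (l * y - m * x)) = (l * x - m * y) * a + (l * (m * y) - m * (l * x)) - b * ((x - y) * c)"
    "a * ((x - y) * b) = (l * x - m * y) * b - b * ((x - y) * d + (l * y - m * x))"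
    "c * ((x - y) * a + (l * y - m * x)) = (l * x - m * y) * c - d * ((x - y) * c)"
    "c * ((x - y) * b) = (l * x - m * y) * d + (l * (m * y) - m * (l * x)) - d * ((x - y) * d + (l * y - m * x))"
proof -
  have e': "b*c = a*(l+m-a) - l*m" using e d by simp
  have r1: "b * ((x - y) * c) = (x-y)*(b*c)" "c * ((x - y) * b) = (x-y)*(b*c)" by (simp_all add: ac_simps)
  show "a * ((x - y) * a + (l * y - m * x)) = (l * x - m * y) * a + (l * (m * y) - m * (l * x)) - b * ((x - y) * c)" unfolding r1 e' by (simp add: algebra_simps)
  show "a * ((x - y) * b) = (l * x - m * y) * b - b * ((x - y) * d + (l * y - m * x))" unfolding d by (simp add: algebra_simps)
  show "c * ((x - y) * a + (l * y - m * x)) = (l * x - m * y) * c - d * ((x - y) * c)" unfolding d by (simp add: algebra_simps)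
  show "c * ((x - y) * b) = (l * x - m * y) * d + (l * (m * y) - m * (l * x)) - d * ((x - y) * d + (l * y - m * x))" unfolding r1 e' d by (simp add: algebra_simps)
qed

lemma mat_pow_2:
  fixes M :: "'a::field^2^2"
  assumes lm: "l \<noteq> m" and tr: "l + m = M$1$1 + M$2$2" and dt: "l*m = M$1$1*M$2$2 - M$1$2*M$2$1"
  shows "mat_pow M k = (\<chi> i j. ((l^k - m^k)/(l-m)) * M$i$j + (if i = j then (l*m^k - m*l^k)/(l-m) else 0))"
proof (induction k)
  case 0
  have "l - m \<noteq> 0" using lm by simp
  then show ?case by (simp add: vec_eq_iff mat_def field_simps)
next
  case (Suc k)
  have nz: "l - m \<noteq> 0" using lm by simp
  have d: "M$2$2 = l + m - M$1$1" using tr by (simp add: algebra_simps)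
  have e: "M$1$2*M$2$1 = M$1$1*M$2$2 - l*m" using dt by (simp add: algebra_simps)
  show ?case
    unfolding mat_pow.simps Suc vec_eq_iff
    apply (simp add: matrix_matrix_mult_def sum_2 forall_2)
    apply (simp add: divide_simps nz lm eq_diff_eq[symmetric])
    using pow_ids[OF d e, of "l^k" "m^k"] by simp
qed

lemma sums_mat:
  fixes g :: "nat \<Rightarrow> 'i::finite \<Rightarrow> 'j::finite \<Rightarrow> 'a::real_normed_vector"
  assumes "\<And>i j. (\<lambda>k. g k i j) sums h i j"
  shows "(\<lambda>k. \<chi> i j. g k i j) sums (\<chi> i j. h i j)"
proof -
  have "(\<lambda>n. \<Sum>k<n. \<chi> i j. g k i j) = (\<lambda>n. \<chi> i j. \<Sum>k<n. g k i j)"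
    by (rule ext) (simp add: vec_eq_iff)
  moreover have "(\<lambda>n. \<chi> i j. \<Sum>k<n. g k i j) \<longlonglongrightarrow> (\<chi> i j. h i j)"
    using assms unfolding sums_def by (intro tendsto_vec_lambda) auto
  ultimately show ?thesis unfolding sums_def by simp
qed

lemma exp_sums_c:
  fixes z c :: "'a::{real_normed_field,banach}"
  shows "(\<lambda>n. c * z^n /\<^sub>R fact n) sums (c * exp z)"
  using sums_mult[OF exp_converges[of z], of c] by (simp add: scaleR_conv_of_real ac_simps)

lemma mat_exp_2:
  fixes M :: "'a::{real_normed_field,banach}^2^2"
  assumes lm: "l \<noteq> m" and tr: "l + m = M$1$1 + M$2$2" and dt: "l*m = M$1$1*M$2$2 - M$1$2*M$2$1"
  shows "mat_exp M = (\<chi> i j. ((exp l - exp m)/(l-m)) * M$i$j + (if i = j then (l*exp m - m*exp l)/(l-m) else 0))"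
proof -
  let ?E = "\<lambda>z k. z^k /\<^sub>R fact k"
  have eq: "(\<lambda>k. (1 / fact k) *\<^sub>R mat_pow M k) = (\<lambda>k. \<chi> i j. ((?E l k - ?E m k)/(l-m)) * M$i$j + (if i = j then (l*?E m k - m*?E l k)/(l-m) else 0))"
    by (rule ext) (simp add: mat_pow_2[OF assms] vec_eq_iff, simp add: scaleR_conv_of_real divide_inverse algebra_simps)
  have "(\<lambda>k. (1 / fact k) *\<^sub>R mat_pow M k) sums (\<chi> i j. ((exp l - exp m)/(l-m)) * M$i$j + (if i = j then (l*exp m - m*exp l)/(l-m) else 0))"
    unfolding eq
    apply (rule sums_mat)
    subgoal for i j by (cases "i = j") (auto intro!: sums_add sums_mult2 sums_divide sums_diff sums_mult exp_converges exp_sums_c)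
    done
  then show ?thesis unfolding mat_exp_def by (rule sums_unique[symmetric])
qed

lemma pow_ids2:
  fixes a b c d l N x :: "'a::comm_ring_1"
  assumes d: "d = l + l - a" and e: "b*c = a*d - l*l"
  shows "a*((1+N)*x*a - N*(l*x)) + b*((1+N)*x*c) = (2+N)*(l*x)*a + (-1-N)*(l*(l*x))"
    "a*((1+N)*x*b) + b*((1+N)*x*d - N*(l*x)) = (2+N)*(l*x)*b"
    "c*((1+N)*x*a - N*(l*x)) + d*((1+N)*x*c) = (2+N)*(l*x)*c"
    "c*((1+N)*x*b) + d*((1+N)*x*d - N*(l*x)) = (2+N)*(l*x)*d + (-1-N)*(l*(l*x))"
proof -
  have e': "b*c = a*(l+l-a) - l*l" using e d by simp
  have r1: "b*((1+N)*x*c) = (1+N)*x*(b*c)" "c*((1+N)*x*b) = (1+N)*x*(b*c)" by (simp_all add: ac_simps)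
  show "a*((1+N)*x*a - N*(l*x)) + b*((1+N)*x*c) = (2+N)*(l*x)*a + (-1-N)*(l*(l*x))" unfolding r1 e' by (simp add: algebra_simps)
  show "a*((1+N)*x*b) + b*((1+N)*x*d - N*(l*x)) = (2+N)*(l*x)*b" unfolding d by (simp add: algebra_simps)
  show "c*((1+N)*x*a - N*(l*x)) + d*((1+N)*x*c) = (2+N)*(l*x)*c" unfolding d by (simp add: algebra_simps)
  show "c*((1+N)*x*b) + d*((1+N)*x*d - N*(l*x)) = (2+N)*(l*x)*d + (-1-N)*(l*(l*x))" unfolding r1 e' d by (simp add: algebra_simps)
qed

lemma mat_pow_2e:
  fixes M :: "'a::field^2^2"
  assumes tr: "l + l = M$1$1 + M$2$2" and dt: "l*l = M$1$1*M$2$2 - M$1$2*M$2$1"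
  shows "mat_pow M k = (\<chi> i j. (of_nat k * l^(k-1)) * M$i$j + (if i = j then (1 - of_nat k) * l^k else 0))"
proof (induction k)
  case 0
  then show ?case by (simp add: vec_eq_iff mat_def)
next
  case (Suc k)
  have d: "M$2$2 = l + l - M$1$1" using tr by (simp add: algebra_simps)
  have e: "M$1$2*M$2$1 = M$1$1*M$2$2 - l*l" using dt by (simp add: algebra_simps)
  note IH = Suc.IH
  show ?case
  proof (cases k)
    case 0
    then show ?thesis by (simp add: vec_eq_iff matrix_matrix_mult_def sum_2 forall_2 mat_def)
  next
    case (Suc n)
    show ?thesis
    apply (simp only: mat_pow.simps(2)[of M k] IH)
    apply (simp add: vec_eq_iff \<open>k = Suc n\<close> matrix_matrix_mult_def sum_2 forall_2)
    using pow_ids2[OF d e, of "of_nat n" "l^n"] by simp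
  qed
qed

lemma exp_sums_d:
  fixes l :: "'a::{real_normed_field,banach}"
  shows "(\<lambda>k. (of_nat k * l^(k-1)) /\<^sub>R fact k) sums exp l"
proof -
  have "(\<lambda>n. (of_nat (Suc n) * l^(Suc n - 1)) /\<^sub>R fact (Suc n)) = (\<lambda>n. l^n /\<^sub>R fact n)"
  proof
    fix n
    have "(fact (Suc n) :: real) = of_nat (Suc n) * fact n" by simp
    then show "(of_nat (Suc n) * l^(Suc n - 1)) /\<^sub>R fact (Suc n) = l^n /\<^sub>R fact n"
      by (simp add: scaleR_conv_of_real field_simps del: of_nat_Suc fact_Suc)
  qed
  then have "(\<lambda>n. (of_nat (Suc n) * l^(Suc n - 1)) /\<^sub>R fact (Suc n)) sums exp l"
    using exp_converges by simp
  then show ?thesis by (subst (asm) sums_Suc_iff) simp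
qed

lemma exp_sums_d2:
  fixes l :: "'a::{real_normed_field,banach}"
  shows "(\<lambda>k. (of_nat k * l^k) /\<^sub>R fact k) sums (l * exp l)"
proof -
  have "(\<lambda>k. l * ((of_nat k * l^(k-1)) /\<^sub>R fact k)) sums (l * exp l)"
    by (rule sums_mult[OF exp_sums_d])
  moreover have "(\<lambda>k. l * ((of_nat k * l^(k-1)) /\<^sub>R fact k)) = (\<lambda>k. (of_nat k * l^k) /\<^sub>R fact k)"
  proof
    fix k show "l * ((of_nat k * l^(k-1)) /\<^sub>R fact k) = (of_nat k * l^k) /\<^sub>R fact k"
      by (cases k) (simp_all add: scaleR_conv_of_real ac_simps)
  qed
  ultimately show ?thesis by simp
qed

lemma exp_sums_dc:
  fixes l c :: "'a::{real_normed_field,banach}"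
  shows "(\<lambda>n. of_nat n * l ^ (n - Suc 0) * c /\<^sub>R fact n) sums (exp l * c)"
  using sums_mult2[OF exp_sums_d[of l], of c] by (simp add: scaleR_conv_of_real ac_simps)

lemma mat_exp_2e:
  fixes M :: "'a::{real_normed_field,banach}^2^2"
  assumes tr: "l + l = M$1$1 + M$2$2" and dt: "l*l = M$1$1*M$2$2 - M$1$2*M$2$1"
  shows "mat_exp M = (\<chi> i j. exp l * M$i$j + (if i = j then exp l - l * exp l else 0))"
proof -
  let ?E = "\<lambda>z k. z^k /\<^sub>R fact k"
  let ?D1 = "\<lambda>k. (of_nat k * l^(k-1)) /\<^sub>R fact k"
  let ?D2 = "\<lambda>k. (of_nat k * l^k) /\<^sub>R fact k"
  have eq: "(\<lambda>k. (1 / fact k) *\<^sub>R mat_pow M k) = (\<lambda>k. \<chi> i j. ?D1 k * M$i$j + (if i = j then ?E l k - ?D2 k else 0))"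
    by (rule ext) (simp add: mat_pow_2e[OF assms] vec_eq_iff, simp add: scaleR_conv_of_real divide_inverse algebra_simps)
  have "(\<lambda>k. (1 / fact k) *\<^sub>R mat_pow M k) sums (\<chi> i j. exp l * M$i$j + (if i = j then exp l - l * exp l else 0))"
    unfolding eq
    apply (rule sums_mat)
    subgoal for i j by (cases "i = j") (auto intro!: sums_add sums_mult2 sums_diff exp_converges exp_sums_dc exp_sums_d2)
    done
  then show ?thesis unfolding mat_exp_def by (rule sums_unique[symmetric])
qed

lemma dplus_ge:
  fixes g :: "complex^'n"
  shows "- Re (g $ i) \<le> dplus g"
proof -
  have "0 \<in> (cpos :: (complex^'n) set)" unfolding cpos_def by simp
  then have ne: "(cpos :: (complex^'n) set) \<noteq> {}" by blast
  show ?thesis unfolding dplus_def infdist_notempty[OF ne]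
  proof (rule cINF_greatest[OF ne])
    fix y assume "y \<in> (cpos :: (complex^'n) set)"
    then have "0 \<le> Re (y $ i)" unfolding cpos_def by auto
    moreover have "Re ((y - g) $ i) \<le> norm ((y - g) $ i)" using abs_Re_le_cmod[of "(y-g)$i"] by simp
    moreover have "norm ((y - g) $ i) \<le> norm (y - g)" by (rule Finite_Cartesian_Product.norm_nth_le)
    ultimately show "- Re (g $ i) \<le> dist g y" by (simp add: dist_norm norm_minus_commute)
  qed
qed

lemma spec_2:
  fixes A :: "real^2^2" and l m :: complex
  assumes tr: "l + m = of_real (A$1$1 + A$2$2)" and dt: "l*m = of_real (A$1$1*A$2$2 - A$1$2*A$2$1)"
  shows "spec A = {l, m}" "spectral_bound A = max (Re l) (Re m)"
proof -
  have "det (cmat A - mat z) = (z - l) * (z - m)" for z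
  proof -
    have "det (cmat A - mat z) = (of_real (A$1$1) - z)*(of_real (A$2$2) - z) - of_real (A$1$2) * of_real (A$2$1)"
      by (simp add: det_2 cmat_def mat_def)
    also have "\<dots> = z*z - (l+m)*z + l*m" unfolding tr dt by (simp add: algebra_simps)
    also have "\<dots> = (z-l)*(z-m)" by (simp add: algebra_simps)
    finally show ?thesis .
  qed
  then have "spec A = {z. (z - l) * (z - m) = 0}" unfolding spec_def by simp
  also have "\<dots> = {l, m}" by auto
  finally show s: "spec A = {l, m}" .
  show "spectral_bound A = max (Re l) (Re m)" unfolding spectral_bound_def s by simp
qed

lemma metzler_pos:
  fixes A :: "real^2^2"
  assumes hb: "A$1$2 \<ge> 0" and hc: "A$2$1 \<ge> 0"
  shows "positive_semigroup A"
  unfolding positive_semigroup_def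
proof (rule allI, rule impI)
  fix t :: real assume t: "0 \<le> t"
  define a where "a = A$1$1"
  define b where "b = A$1$2"
  define c where "c = A$2$1"
  define d where "d = A$2$2"
  have bc: "0 \<le> b" "0 \<le> c" using hb hc b_def c_def by auto
  define D where "D = (a-d)^2 + 4*b*c"
  have D0: "0 \<le> D" unfolding D_def using bc by (simp add: add_nonneg_nonneg)
  define r where "r = sqrt D"
  have r0: "0 \<le> r" unfolding r_def using D0 by simp
  have rr: "r * r = D" unfolding r_def using D0 by simp
  have adr: "\<bar>a - d\<bar> \<le> r"
  proof -
    have "(a-d)^2 \<le> D" unfolding D_def using bc by (simp add: mult_nonneg_nonneg)
    then have "sqrt ((a-d)^2) \<le> sqrt D" by (rule real_sqrt_le_mono)
    then show ?thesis unfolding r_def by simp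
  qed
  have Aent: "A$1$1 = a" "A$1$2 = b" "A$2$1 = c" "A$2$2 = d" by (simp_all add: a_def b_def c_def d_def)
  have Mij: "(t *\<^sub>R A)$1$1 = t*a" "(t *\<^sub>R A)$1$2 = t*b" "(t *\<^sub>R A)$2$1 = t*c" "(t *\<^sub>R A)$2$2 = t*d"
    by (simp_all add: a_def b_def c_def d_def)
  have "\<forall>i j. 0 \<le> mat_exp (t *\<^sub>R A) $ i $ j"
  proof (cases "t*r = 0")
    case True
    define l where "l = t*(a+d)/2"
    have h1: "l + l = (t *\<^sub>R A)$1$1 + (t *\<^sub>R A)$2$2" unfolding Mij l_def by (simp add: field_simps)
    have tD: "t*t*D = 0" using True rr by (metis mult_eq_0_iff)
    have h2: "l*l = (t *\<^sub>R A)$1$1 * (t *\<^sub>R A)$2$2 - (t *\<^sub>R A)$1$2 * (t *\<^sub>R A)$2$1"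
    proof -
      have "l*l - (t*a*(t*d) - t*b*(t*c)) = t*t*D/4" unfolding l_def D_def by (simp add: field_simps power2_eq_square)
      then show ?thesis unfolding Mij using tD by simp
    qed
    have ta: "t*a - l = 0" "t*d - l = 0"
    proof -
      have "t = 0 \<or> D = 0" using tD by simp
      moreover have "D = 0 \<Longrightarrow> a = d" unfolding D_def using bc
        by (smt (verit) mult_nonneg_nonneg power2_less_eq_zero_iff)
      ultimately show "t*a - l = 0" "t*d - l = 0" unfolding l_def by (auto simp: field_simps)
    qed
    have "\<And>x. exp l * x + (exp l - l * exp l) = exp l * ((x - l) + 1)" by (simp add: algebra_simps)
    then show ?thesis
      unfolding mat_exp_2e[OF h1 h2] forall_2 using t bc ta by (simp add: Mij Aent)
  next
    case False
    then have tp: "0 < t" and rp: "0 < r" using t r0 by (auto simp: order_le_less)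
    define l where "l = t*(a+d+r)/2"
    define m where "m = t*(a+d-r)/2"
    have lm: "m < l" unfolding l_def m_def using tp rp by (simp add: field_simps)
    have h1: "l + m = (t *\<^sub>R A)$1$1 + (t *\<^sub>R A)$2$2" unfolding Mij l_def m_def by (simp add: field_simps)
    have h2: "l*m = (t *\<^sub>R A)$1$1 * (t *\<^sub>R A)$2$2 - (t *\<^sub>R A)$1$2 * (t *\<^sub>R A)$2$1"
    proof -
      have "l*m = t*t*((a+d)^2 - r*r)/4" unfolding l_def m_def by (simp add: field_simps power2_eq_square)
      also have "\<dots> = t*a*(t*d) - t*b*(t*c)" unfolding rr D_def by (simp add: field_simps power2_eq_square)
      finally show ?thesis unfolding Mij .
    qed
    have U: "0 \<le> (exp l - exp m)/(l-m)" using lm by simp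
    have diag: "0 \<le> (exp l - exp m)/(l-m) * x + (l*exp m - m*exp l)/(l-m)" if "m \<le> x" "x \<le> l" for x
    proof -
      have "(exp l - exp m)/(l-m) * x + (l*exp m - m*exp l)/(l-m) = ((exp l - exp m)*x + (l*exp m - m*exp l))/(l-m)"
        by (simp add: add_divide_distrib)
      also have "\<dots> = (exp l * (x - m) + exp m * (l - x))/(l-m)"
        by (simp add: algebra_simps)
      also have "0 \<le> \<dots>" using that lm by (intro divide_nonneg_pos add_nonneg_nonneg mult_nonneg_nonneg) auto
      finally show ?thesis .
    qed
    have ra: "m \<le> t*a" "t*a \<le> l" "m \<le> t*d" "t*d \<le> l"
    proof -
      have "a - d \<le> r" "d - a \<le> r" using adr by auto
      then have "0 \<le> t*(r + a - d)" "0 \<le> t*(r - a + d)" using t by simp_all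
      then show "m \<le> t*a" "t*a \<le> l" "m \<le> t*d" "t*d \<le> l"
        unfolding l_def m_def by (simp_all add: field_simps)
    qed
    have Ux: "0 \<le> (exp l - exp m) * (t * x) / (l - m)" if "0 \<le> x" for x
      using lm that t by (intro divide_nonneg_pos mult_nonneg_nonneg) auto
    show ?thesis
      unfolding mat_exp_2[OF lm[THEN less_imp_neq, symmetric] h1 h2] forall_2
      using diag[OF ra(1,2)] diag[OF ra(3,4)] Ux[OF bc(1)] Ux[OF bc(2)] by (simp add: Mij Aent)
  qed
  then show "\<forall>i j. 0 \<le> mat_exp (t *\<^sub>R A) $ i $ j" .
qed

lemma ap_contra:
  assumes ap: "asymptotically_positive A" and f: "f \<in> cpos" and e: "0 < \<epsilon>"
    and fr: "\<And>T. \<exists>t\<ge>T. \<epsilon> \<le> dplus (rescaled_sg A t *v f)"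
  shows False
proof -
  have "((\<lambda>t. dplus (rescaled_sg A t *v f)) \<longlongrightarrow> 0) at_top" using ap f unfolding asymptotically_positive_def by blast
  then have "eventually (\<lambda>t. dplus (rescaled_sg A t *v f) < \<epsilon>) at_top" using e by (rule order_tendstoD)
  then obtain T where "\<And>t. t \<ge> T \<Longrightarrow> dplus (rescaled_sg A t *v f) < \<epsilon>" by (auto simp: eventually_at_top_linorder)
  with fr[of T] show False by force
qed

lemma axis_cpos: "axis j (1::complex) \<in> cpos"
  unfolding cpos_def by (simp add: axis_def)

lemma mv_axis: "(R *v axis j (1::'a::comm_ring_1)) $ i = R $ i $ j"
  by (simp add: matrix_vector_mult_def axis_def if_distrib cong: if_cong)

lemma resc_entries:
  fixes A :: "real^2^2"
  shows "rescaled_sg A t = mat_exp (\<chi> i j. complex_of_real (t * (A$i$j - (if i = j then spectral_bound A else 0))))"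
  unfolding rescaled_sg_def
  by (rule arg_cong[where f=mat_exp]) (simp add: vec_eq_iff cmat_def mat_def, simp add: scaleR_conv_of_real)

lemma case_neg:
  fixes A :: "real^2^2"
  assumes ap: "asymptotically_positive A"
    and D: "(A$1$1 - A$2$2)^2 + 4 * A$1$2 * A$2$1 < 0"
  shows False
proof -
  define a where "a = A$1$1"
  define b where "b = A$1$2"
  define c where "c = A$2$1"
  define d where "d = A$2$2"
  have Aent: "A$1$1 = a" "A$1$2 = b" "A$2$1 = c" "A$2$2 = d" by (simp_all add: a_def b_def c_def d_def)
  define D where "D = (a-d)^2 + 4*b*c"
  have Dn: "D < 0" using D unfolding D_def Aent .
  define w where "w = sqrt (-D) / 2"
  have wp: "0 < w" unfolding w_def using Dn by simp
  have ww: "w * w = - D / 4" unfolding w_def using Dn by (simp add: field_simps)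
  define p where "p = (a+d)/2"
  define l where "l = complex_of_real p + \<i> * complex_of_real w"
  define m where "m = complex_of_real p - \<i> * complex_of_real w"
  have lm1: "l + m = of_real (A$1$1 + A$2$2)" unfolding l_def m_def p_def Aent by simp
  have "l * m = of_real (p*p + w*w)" unfolding l_def m_def by (simp add: complex_eq_iff)
  also have "p*p + w*w = a*d - b*c" unfolding p_def ww D_def by (simp add: field_simps power2_eq_square)
  finally have lm2: "l * m = of_real (A$1$1*A$2$2 - A$1$2*A$2$1)" unfolding Aent .
  have sb: "spectral_bound A = p" unfolding spec_2(2)[OF lm1 lm2] l_def m_def by simp
  have fr: "\<exists>t\<ge>T. 1 \<le> dplus (rescaled_sg A t *v axis 1 1)" for T
  proof -
    obtain k :: nat where k: "T * w / pi < of_nat k" using reals_Archimedean2 by blast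
    define x where "x = (2 * of_nat k + 1) * pi"
    define t where "t = x / w"
    have "T * w < of_nat k * pi" using k by (simp add: field_simps)
    also have "\<dots> \<le> x" unfolding x_def by (simp add: field_simps)
    finally have tT: "T \<le> t" unfolding t_def using wp by (simp add: field_simps)
    have tw: "t * w = x" unfolding t_def using wp by simp
    define l' where "l' = \<i> * complex_of_real x"
    have xp: "0 < x" unfolding x_def by simp
    have ne: "l' \<noteq> - l'" unfolding l'_def using xp by (simp add: complex_eq_iff)
    let ?M = "\<chi> i j. complex_of_real (t * (A$i$j - (if i = j then spectral_bound A else 0)))"
    have h1: "l' + - l' = ?M$1$1 + ?M$2$2" unfolding sb p_def by (simp add: field_simps Aent)
    have "l' * - l' = of_real (x * x)" unfolding l'_def by (simp add: complex_eq_iff)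
    also have "x * x = t*(a-p) * (t*(d-p)) - t*b*(t*c)"
    proof -
      have "x * x = t*t*(w*w)" using tw by (simp add: algebra_simps)
      then show ?thesis unfolding ww D_def p_def by (simp add: field_simps power2_eq_square)
    qed
    finally have h2: "l' * - l' = ?M$1$1 * ?M$2$2 - ?M$1$2 * ?M$2$1" unfolding sb by (simp add: Aent)
    have e1: "exp l' = -1"
    proof -
      have "l' = of_nat (2*k+1) * (\<i> * of_real pi)" unfolding l'_def x_def by simp
      then have "exp l' = exp (\<i> * of_real pi) ^ (2*k+1)" by (simp only: exp_of_nat_mult)
      then show ?thesis by simp
    qed
    have e2: "exp (- l') = -1" using e1 by (simp add: exp_minus)
    have "rescaled_sg A t $ 1 $ 1 = -1"
      unfolding resc_entries mat_exp_2[OF ne h1 h2] e1 e2 using ne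
      by (simp add: divide_simps)
    then have "1 \<le> dplus (rescaled_sg A t *v axis 1 1)" using dplus_ge[of "rescaled_sg A t *v axis 1 1" 1]
      by (simp add: mv_axis)
    then show ?thesis using tT by blast
  qed
  show False by (rule ap_contra[OF ap axis_cpos _ fr]) simp
qed

lemma bounded_coeff_zero:
  fixes b K :: real
  assumes "\<And>t. 0 \<le> t \<Longrightarrow> \<bar>t * b\<bar> \<le> K"
  shows "b = 0"
proof (rule ccontr)
  assume b: "b \<noteq> 0"
  define t where "t = (\<bar>K\<bar> + 1) / \<bar>b\<bar>"
  have "0 \<le> t" unfolding t_def by simp
  moreover have "\<bar>t * b\<bar> = \<bar>K\<bar> + 1" unfolding t_def using b by (simp add: abs_mult)
  ultimately show False using assms[of t] by simp
qed

lemma case_zero: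
  fixes A :: "real^2^2"
  assumes bnd: "bounded (rescaled_sg A ` {0..})"
    and D: "(A$1$1 - A$2$2)^2 + 4 * A$1$2 * A$2$1 = 0"
  shows "A$1$2 = 0 \<and> A$2$1 = 0"
proof -
  define a where "a = A$1$1"
  define b where "b = A$1$2"
  define c where "c = A$2$1"
  define d where "d = A$2$2"
  have Aent: "A$1$1 = a" "A$1$2 = b" "A$2$1 = c" "A$2$2 = d" by (simp_all add: a_def b_def c_def d_def)
  have D0: "(a-d)^2 + 4*b*c = 0" using D unfolding Aent .
  define p where "p = (a+d)/2"
  have lm1: "of_real p + of_real p = complex_of_real (A$1$1 + A$2$2)" unfolding p_def Aent by (simp add: field_simps)
  have "p * p = a*d - b*c" using D0 unfolding p_def by (simp add: field_simps power2_eq_square)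
  then have lm2: "of_real p * of_real p = complex_of_real (A$1$1*A$2$2 - A$1$2*A$2$1)" unfolding Aent by (metis of_real_mult)
  have sb: "spectral_bound A = p" unfolding spec_2(2)[OF lm1 lm2] by simp
  obtain K where K: "\<And>x. x \<in> rescaled_sg A ` {0..} \<Longrightarrow> norm x \<le> K" using bnd unfolding bounded_iff by blast
  have ent: "rescaled_sg A t $ 1 $ 2 = of_real (t * b) \<and> rescaled_sg A t $ 2 $ 1 = of_real (t * c)" for t
  proof -
    let ?M = "\<chi> i j. complex_of_real (t * (A$i$j - (if i = j then spectral_bound A else 0)))"
    have h1: "0 + 0 = ?M$1$1 + ?M$2$2" unfolding sb p_def by (simp add: field_simps Aent)
    have "t*(a-p) * (t*(d-p)) - t*b*(t*c) = 0"
    proof -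
      have "t*(a-p) * (t*(d-p)) - t*b*(t*c) = - t*t*((a-d)^2 + 4*b*c)/4" unfolding p_def by (simp add: field_simps power2_eq_square)
      then show ?thesis using D0 by simp
    qed
    then have h2: "0 * 0 = ?M$1$1 * ?M$2$2 - ?M$1$2 * ?M$2$1" unfolding sb by (simp add: Aent flip: of_real_mult of_real_diff)
    show ?thesis unfolding resc_entries mat_exp_2e[OF h1 h2] by (simp add: Aent)
  qed
  have "\<bar>t * b\<bar> \<le> K \<and> \<bar>t * c\<bar> \<le> K" if "0 \<le> t" for t
  proof -
    have n: "norm (rescaled_sg A t) \<le> K" using K that by auto
    have "norm (rescaled_sg A t $ i $ j) \<le> K" for i j
      using Finite_Cartesian_Product.norm_nth_le[of "rescaled_sg A t $ i" j] Finite_Cartesian_Product.norm_nth_le[of "rescaled_sg A t" i] n by linarith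
    from this[of 1 2] this[of 2 1] show ?thesis using ent[of t] by (simp del: of_real_mult add: norm_of_real)
  qed
  then have "b = 0" "c = 0" using bounded_coeff_zero by blast+
  then show ?thesis using Aent by simp
qed

lemma case_pos:
  fixes A :: "real^2^2"
  assumes ap: "asymptotically_positive A"
    and D: "(A$1$1 - A$2$2)^2 + 4 * A$1$2 * A$2$1 > 0"
  shows "A$1$2 \<ge> 0 \<and> A$2$1 \<ge> 0"
proof -
  define a where "a = A$1$1"
  define b where "b = A$1$2"
  define c where "c = A$2$1"
  define d where "d = A$2$2"
  have Aent: "A$1$1 = a" "A$1$2 = b" "A$2$1 = c" "A$2$2 = d" by (simp_all add: a_def b_def c_def d_def)
  define D where "D = (a-d)^2 + 4*b*c"
  have Dp: "0 < D" using D unfolding D_def Aent .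
  define r where "r = sqrt D"
  have rp: "0 < r" unfolding r_def using Dp by simp
  have rr: "r * r = D" unfolding r_def using Dp by simp
  define p where "p = (a+d+r)/2"
  define q where "q = (a+d-r)/2"
  have "p + q = a + d" unfolding p_def q_def by (simp add: field_simps)
  then have lm1: "of_real p + of_real q = complex_of_real (A$1$1 + A$2$2)" unfolding Aent by (metis of_real_add)
  have "p * q = a*d - b*c" unfolding p_def q_def using rr unfolding D_def by (simp add: field_simps power2_eq_square)
  then have lm2: "of_real p * of_real q = complex_of_real (A$1$1*A$2$2 - A$1$2*A$2$1)" unfolding Aent by (metis of_real_mult)
  have sb: "spectral_bound A = p" unfolding spec_2(2)[OF lm1 lm2] p_def q_def using rp by simp
  have ent: "rescaled_sg A t $ 1 $ 2 = of_real ((1 - exp (-(t*r))) * b / r) \<and>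
             rescaled_sg A t $ 2 $ 1 = of_real ((1 - exp (-(t*r))) * c / r)" if tp: "0 < t" for t
  proof -
    let ?M = "\<chi> i j. complex_of_real (t * (A$i$j - (if i = j then spectral_bound A else 0)))"
    define m' where "m' = complex_of_real (-(t*r))"
    have ne: "0 \<noteq> m'" unfolding m'_def using tp rp by simp
    have "-(t*r) = t*(a-p) + t*(d-p)" unfolding p_def by (simp add: field_simps)
    then have h1: "0 + m' = ?M$1$1 + ?M$2$2" unfolding sb m'_def by (simp add: Aent del: of_real_mult of_real_diff flip: of_real_add)
    have "t*(a-p) * (t*(d-p)) - t*b*(t*c) = 0"
    proof -
      have "t*(a-p) * (t*(d-p)) - t*b*(t*c) = t*t*(r*r - ((a-d)^2 + 4*b*c))/4" unfolding p_def by (simp add: field_simps power2_eq_square)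
      then show ?thesis using rr unfolding D_def by simp
    qed
    then have h2: "0 * m' = ?M$1$1 * ?M$2$2 - ?M$1$2 * ?M$2$1" unfolding sb by (simp add: Aent flip: of_real_mult of_real_diff)
    have em: "exp m' = of_real (exp (-(t*r)))" unfolding m'_def by (rule exp_of_real)
    have U: "(exp 0 - exp m') / (0 - m') = complex_of_real ((1 - exp (-(t*r))) / (t * r))"
      unfolding em unfolding m'_def by simp
    show ?thesis unfolding resc_entries mat_exp_2[OF ne h1 h2] U using tp rp by (simp add: Aent field_simps)
  qed
  have main: "0 \<le> x" if hx: "\<And>t. 0 < t \<Longrightarrow> rescaled_sg A t $ i $ j = of_real ((1 - exp (-(t*r))) * x / r)" for x i j
  proof (rule ccontr)
    assume "\<not> 0 \<le> x"
    then have xn: "x < 0" by simp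
    have fr: "\<exists>t\<ge>T. - x / (2*r) \<le> dplus (rescaled_sg A t *v axis j 1)" for T
    proof -
      define t where "t = max (max T 1) (ln 2 / r)"
      have tp: "0 < t" unfolding t_def by simp
      have "ln 2 / r \<le> t" unfolding t_def by simp
      then have "ln 2 \<le> t * r" using rp by (simp add: pos_divide_le_eq)
      then have "exp (- (t*r)) \<le> exp (- ln 2)" by simp
      then have e: "exp (- (t*r)) \<le> 1/2" by (simp add: exp_minus)
      have "- x / (2*r) \<le> - ((1 - exp (-(t*r))) * x / r)"
      proof -
        have "- x / (2*r) = (1/2) * (-x) / r" by simp
        also have "\<dots> \<le> (1 - exp (-(t*r))) * (-x) / r" using e xn rp
          by (intro divide_right_mono mult_right_mono) auto
        finally show ?thesis by simp
      qed
      also have "\<dots> \<le> dplus (rescaled_sg A t *v axis j 1)"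
        using dplus_ge[of "rescaled_sg A t *v axis j 1" i] hx[OF tp] by (simp add: mv_axis)
      finally have "- x / (2*r) \<le> dplus (rescaled_sg A t *v axis j 1)" .
      moreover have "T \<le> t" unfolding t_def by simp
      ultimately show ?thesis by blast
    qed
    show False by (rule ap_contra[OF ap axis_cpos _ fr]) (use xn rp in \<open>simp add: divide_neg_pos\<close>)
  qed
  have "0 \<le> b" by (rule main[of 1 2]) (use ent in blast)
  moreover have "0 \<le> c" by (rule main[of 2 1]) (use ent in blast)
  ultimately show ?thesis using Aent by simp
qed

theorem proposition9p2:
  fixes A :: "real^2^2"
  assumes "bounded (rescaled_sg A ` {0..})"
    and "asymptotically_positive A"
  shows "positive_semigroup A"
proof -
  have "A$1$2 \<ge> 0 \<and> A$2$1 \<ge> 0"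
  proof (cases rule: linorder_cases[of "(A$1$1 - A$2$2)^2 + 4 * A$1$2 * A$2$1" 0])
    case less
    then show ?thesis using case_neg[OF assms(2)] by blast
  next
    case equal
    then show ?thesis using case_zero[OF assms(1)] by simp
  next
    case greater
    then show ?thesis using case_pos[OF assms(2)] by blast
  qed
  then show ?thesis using metzler_pos by blast
qed

end
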